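(* Let $k\ge2$, let $\Pi\subseteq\mathfrak S_k$ be a nonoverlapping set of patterns, and let $I$ be a finite set of positive integers with $m=\max(I\cup\{0\})$. Then there is a function $g$ in the $\mathbb Q$-vector space $V_\Pi$ spanned by the functions $n\mapsto n^{j}\,\mathrm{av}_\Pi(n+l)$ ($j\in\mathbb Z_{\ge0}$, $l\in\mathbb Z$) such that $\#\Pi(I;n)=g(n)$ for all integers $n\ge m+k-1$.
   Context: Two integer sequences $a_1\cdots a_k$ and $b_1\cdots b_k$ are order isomorphic if $a_i<a_j\iff b_i<b_j$ for all $i,j$. For $\sigma\in\mathfrak S_k$, a permutation $\pi\in\mathfrak S_n$ contains a consecutive copy of $\sigma$ at index $i$ if $\pi_i\pi_{i+1}\cdots\pi_{i+k-1}$ is order isomorphic to $\sigma$. For a set $\Pi$ of patterns, $\Pi(I;n)$ is the set of $\pi\in\mathfrak S_n$ such that the set of indices $i$ at which $\pi$ contains a consecutive copy of some $\sigma\in\Pi$ is exactly $I$, and $\mathrm{av}_\Pi(n)=\#\Pi(\emptyset;n)$ (with $\mathrm{av}_\Pi(n)$ understood as $\#\Pi(\emptyset;n)$ for all integers $n\ge0$). $\Pi\subseteq\mathfrak S_k$ is nonoverlapping if for all (not necessarily distinct) $\sigma,\tau\in\Pi$ and every $l$ with $1<l<k$, the length-$l$ prefix of $\sigma$ is not order isomorphic to the length-$l$ suffix of $\tau$. *)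

theory Defs
  imports "HOL-Combinatorics.Multiset_Permutations"
begin

text \<open>Permutations of [n] are represented as lists: the elements of
  permutations_of_set {1..n}, i.e. the one-line notation pi_1 ... pi_n.\<close>

definition order_iso :: "nat list \<Rightarrow> nat list \<Rightarrow> bool" where
  "order_iso a b \<longleftrightarrow> length a = length b \<and>
     (\<forall>i < length a. \<forall>j < length a. (a ! i < a ! j \<longleftrightarrow> b ! i < b ! j))"

definition occ_set :: "nat \<Rightarrow> nat list set \<Rightarrow> nat list \<Rightarrow> nat set" where
  "occ_set k P p = {i. 1 \<le> i \<and> i + k - 1 \<le> length p \<and>
      (\<exists>\<sigma>\<in>P. order_iso (take k (drop (i - 1) p)) \<sigma>)}"

definition PiI :: "nat \<Rightarrow> nat list set \<Rightarrow> nat set \<Rightarrow> nat \<Rightarrow> nat list set" where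
  "PiI k P I n = {p \<in> permutations_of_set {1..n}. occ_set k P p = I}"

text \<open>av on integers; for negative arguments (no permutations) it is 0.\<close>
definition av :: "nat \<Rightarrow> nat list set \<Rightarrow> int \<Rightarrow> nat" where
  "av k P n = (if n < 0 then 0 else card (PiI k P {} (nat n)))"

definition nonoverlapping :: "nat \<Rightarrow> nat list set \<Rightarrow> bool" where
  "nonoverlapping k P \<longleftrightarrow> (\<forall>\<sigma>\<in>P. \<forall>\<tau>\<in>P. \<forall>l. 1 < l \<and> l < k \<longrightarrow>
      \<not> order_iso (take l \<sigma>) (drop (k - l) \<tau>))"

end

theory Submission imports Defs "HOL-Library.Infinite_Set" "HOL-Computational_Algebra.Polynomial" begin

lemma order_iso_sym: "order_iso a b \<Longrightarrow> order_iso b a"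
  unfolding order_iso_def by auto

lemma order_iso_trans: "order_iso a b \<Longrightarrow> order_iso b c \<Longrightarrow> order_iso a c"
  unfolding order_iso_def by auto

lemma order_iso_take: "order_iso a b \<Longrightarrow> order_iso (take l a) (take l b)"
  unfolding order_iso_def by auto

lemma order_iso_drop: "order_iso a b \<Longrightarrow> order_iso (drop l a) (drop l b)"
  unfolding order_iso_def by auto

lemma order_iso_map:
  assumes "\<forall>x\<in>set w. \<forall>y\<in>set w. x < y \<longrightarrow> f x < f y"
  shows "order_iso (map f w) s \<longleftrightarrow> order_iso w s"
proof -
  have "\<forall>x\<in>set w. \<forall>y\<in>set w. (f x < f y \<longleftrightarrow> x < y)"
    using assms by (metis linorder_neqE_nat order_less_asym order_less_irrefl)
  then show ?thesis unfolding order_iso_def by (auto simp: nth_mem)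
qed

lemma occ_map:
  assumes "\<forall>x\<in>set w. \<forall>y\<in>set w. x < y \<longrightarrow> f x < f y"
  shows "occ_set k P (map f w) = occ_set k P w"
proof -
  have "\<And>i. order_iso (take k (drop (i - 1) (map f w))) \<sigma> \<longleftrightarrow> order_iso (take k (drop (i - 1) w)) \<sigma>" for \<sigma>
  proof -
    fix i
    have s: "set (take k (drop (i - 1) w)) \<subseteq> set w"
      by (meson in_set_dropD in_set_takeD subsetI)
    show "?thesis i" unfolding take_map drop_map
      by (rule order_iso_map) (use assms s in blast)
  qed
  then show ?thesis unfolding occ_set_def by simp
qed

lemma transfer_perm:
  assumes bij: "bij_betw f A B" and mono: "\<forall>x\<in>A. \<forall>y\<in>A. x < y \<longrightarrow> f x < f y"
  shows "card {xs\<in>permutations_of_set A. occ_set k P xs = C} = card {ys\<in>permutations_of_set B. occ_set k P ys = C}"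
proof -
  have inj: "inj_on f A" using bij by (simp add: bij_betw_def)
  have injm: "inj_on (map f) (permutations_of_set A)"
  proof (rule inj_onI)
    fix xs ys assume "xs \<in> permutations_of_set A" "ys \<in> permutations_of_set A" "map f xs = map f ys"
    then show "xs = ys" using inj
      by (intro map_inj_on[of f xs ys]) (auto simp: permutations_of_set_def)
  qed
  have img: "map f ` {xs\<in>permutations_of_set A. occ_set k P xs = C} = {ys\<in>permutations_of_set B. occ_set k P ys = C}"
  proof
    show "map f ` {xs \<in> permutations_of_set A. occ_set k P xs = C} \<subseteq> {ys \<in> permutations_of_set B. occ_set k P ys = C}"
    proof
      fix ys assume "ys \<in> map f ` {xs \<in> permutations_of_set A. occ_set k P xs = C}"
      then obtain xs where xs: "xs \<in> permutations_of_set A" "occ_set k P xs = C" "ys = map f xs" by auto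
      have "set ys = B" using xs bij by (simp add: permutations_of_set_def bij_betw_def)
      moreover have "distinct ys" using xs inj by (simp add: permutations_of_set_def distinct_map)
      moreover have "occ_set k P ys = C" using xs mono by (simp add: occ_map permutations_of_set_def)
      ultimately show "ys \<in> {ys \<in> permutations_of_set B. occ_set k P ys = C}" by (auto simp: permutations_of_set_def)
    qed
  next
    show "{ys \<in> permutations_of_set B. occ_set k P ys = C} \<subseteq> map f ` {xs \<in> permutations_of_set A. occ_set k P xs = C}"
    proof
      fix ys assume ys: "ys \<in> {ys \<in> permutations_of_set B. occ_set k P ys = C}"
      define g where "g = inv_into A f"
      have bg: "bij_betw g B A" using bij g_def by (simp add: bij_betw_inv_into)
      define xs where "xs = map g ys"
      have fg: "map f xs = ys" unfolding xs_def map_map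
        using ys bij g_def by (auto simp: permutations_of_set_def bij_betw_def f_inv_into_f intro!: map_idI)
      have "set xs = A" using ys bg by (simp add: xs_def permutations_of_set_def bij_betw_def)
      moreover have "distinct xs" using ys bg by (simp add: xs_def permutations_of_set_def distinct_map bij_betw_def)
      moreover have "occ_set k P xs = C"
      proof -
        have "occ_set k P (map f xs) = occ_set k P xs" using mono \<open>set xs = A\<close> by (simp add: occ_map)
        then show ?thesis using fg ys by simp
      qed
      ultimately show "ys \<in> map f ` {xs \<in> permutations_of_set A. occ_set k P xs = C}"
        using fg by (auto simp: permutations_of_set_def)
    qed
  qed
  have "card (map f ` {xs\<in>permutations_of_set A. occ_set k P xs = C}) = card {xs\<in>permutations_of_set A. occ_set k P xs = C}"
    by (rule card_image) (rule inj_on_subset[OF injm], auto)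
  then show ?thesis using img by simp
qed

lemma transfer_PiI:
  assumes "finite S" "card S = n"
  shows "card {ys\<in>permutations_of_set S. occ_set k P ys = C} = card (PiI k P C n)"
proof -
  obtain h where h: "bij_betw h {..<card S} S" "strict_mono_on {..<card S} h"
    using ex_bij_betw_strict_mono_card[OF assms(1)] by blast
  have 1: "card {xs\<in>permutations_of_set {..<n}. occ_set k P xs = C} = card {ys\<in>permutations_of_set S. occ_set k P ys = C}"
    using h assms(2) by (intro transfer_perm) (auto simp: strict_mono_on_def)
  have b: "bij_betw Suc {..<n} {1..n}"
    by (rule bij_betwI[where g="\<lambda>x. x - 1"]) auto
  have 2: "card {xs\<in>permutations_of_set {..<n}. occ_set k P xs = C} = card {ys\<in>permutations_of_set {1..n}. occ_set k P ys = C}"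
    by (rule transfer_perm[OF b]) auto
  show ?thesis using 1 2 unfolding PiI_def by simp
qed

lemma product_count:
  assumes "p \<le> n"
  shows "card {\<pi>\<in>permutations_of_set {1..n}. occ_set k P (take p \<pi>) = A \<and> occ_set k P (drop p \<pi>) = B}
       = (n choose p) * card (PiI k P A p) * card (PiI k P B (n - p))"
proof -
  define U where "U = {1..n::nat}"
  define Ts where "Ts = {T. T \<subseteq> U \<and> card T = p}"
  define X where "X = (\<lambda>T. {xs\<in>permutations_of_set T. occ_set k P xs = A})"
  define Y where "Y = (\<lambda>T. {ys\<in>permutations_of_set (U - T). occ_set k P ys = B})"
  define G where "G = (\<lambda>T. (\<lambda>(xs,ys). xs @ ys) ` (X T \<times> Y T))"
  have fU: "finite U" by (simp add: U_def)
  have fTs: "finite Ts" unfolding Ts_def using fU by simp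
  have eq: "{\<pi>\<in>permutations_of_set U. occ_set k P (take p \<pi>) = A \<and> occ_set k P (drop p \<pi>) = B} = \<Union>(G ` Ts)"
  proof
    show "{\<pi>\<in>permutations_of_set U. occ_set k P (take p \<pi>) = A \<and> occ_set k P (drop p \<pi>) = B} \<subseteq> \<Union>(G ` Ts)"
    proof
      fix \<pi> assume h: "\<pi> \<in> {\<pi>\<in>permutations_of_set U. occ_set k P (take p \<pi>) = A \<and> occ_set k P (drop p \<pi>) = B}"
      then have d: "distinct \<pi>" "set \<pi> = U" by (auto simp: permutations_of_set_def)
      have len: "length \<pi> = n" using d distinct_card[OF d(1)] by (simp add: U_def)
      define T where "T = set (take p \<pi>)"
      have dt: "distinct (take p \<pi>)" "distinct (drop p \<pi>)" using d by auto
      have cT: "card T = p" using distinct_card[OF dt(1)] len assms by (simp add: T_def)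
      have TU: "T \<subseteq> U" using d by (auto simp: T_def dest: in_set_takeD)
      have sd: "set (drop p \<pi>) = U - T"
      proof -
        have "set \<pi> = set (take p \<pi>) \<union> set (drop p \<pi>)" by (metis append_take_drop_id set_append)
        moreover have "set (take p \<pi>) \<inter> set (drop p \<pi>) = {}"
          using d(1) by (metis append_take_drop_id distinct_append)
        ultimately show ?thesis using d by (auto simp: T_def)
      qed
      have "T \<in> Ts" using cT TU by (simp add: Ts_def)
      moreover have "\<pi> \<in> G T"
        unfolding G_def X_def Y_def using h dt sd
        by (auto simp: permutations_of_set_def T_def intro!: image_eqI[where x="(take p \<pi>, drop p \<pi>)"])
      ultimately show "\<pi> \<in> \<Union>(G ` Ts)" by blast
    qed
  next
    show "\<Union>(G ` Ts) \<subseteq> {\<pi>\<in>permutations_of_set U. occ_set k P (take p \<pi>) = A \<and> occ_set k P (drop p \<pi>) = B}"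
    proof
      fix \<pi> assume "\<pi> \<in> \<Union>(G ` Ts)"
      then obtain T xs ys where T: "T \<in> Ts" and xs: "xs \<in> X T" and ys: "ys \<in> Y T" and pi: "\<pi> = xs @ ys"
        unfolding G_def by auto
      have dx: "distinct xs" "set xs = T" "occ_set k P xs = A" using xs by (auto simp: X_def permutations_of_set_def)
      have dy: "distinct ys" "set ys = U - T" "occ_set k P ys = B" using ys by (auto simp: Y_def permutations_of_set_def)
      have lx: "length xs = p" using distinct_card[OF dx(1)] dx(2) T by (simp add: Ts_def)
      have "T \<subseteq> U" using T by (simp add: Ts_def)
      then show "\<pi> \<in> {\<pi>\<in>permutations_of_set U. occ_set k P (take p \<pi>) = A \<and> occ_set k P (drop p \<pi>) = B}"
        using dx dy lx pi by (auto simp: permutations_of_set_def)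
    qed
  qed
  have fin: "\<forall>T\<in>Ts. finite (G T)" unfolding G_def X_def Y_def by auto
  have disj: "\<forall>T\<in>Ts. \<forall>T'\<in>Ts. T \<noteq> T' \<longrightarrow> G T \<inter> G T' = {}"
  proof (intro ballI impI)
    fix T T' assume T: "T \<in> Ts" and T': "T' \<in> Ts" and ne: "T \<noteq> T'"
    show "G T \<inter> G T' = {}"
    proof (rule ccontr)
      assume "G T \<inter> G T' \<noteq> {}"
      then obtain xs ys xs' ys' where "xs \<in> X T" "ys \<in> Y T" "xs' \<in> X T'" "ys' \<in> Y T'" "xs @ ys = xs' @ ys'"
        unfolding G_def by fastforce
      moreover have "length xs = p" if "xs \<in> X T" "T \<in> Ts" for xs T
        using that distinct_card[of xs] by (auto simp: X_def Ts_def permutations_of_set_def)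
      ultimately have "xs = xs'" using T T' by (metis append_eq_append_conv)
      then show False using \<open>xs \<in> X T\<close> \<open>xs' \<in> X T'\<close> ne by (auto simp: X_def permutations_of_set_def)
    qed
  qed
  have cardG: "card (G T) = card (PiI k P A p) * card (PiI k P B (n - p))" if T: "T \<in> Ts" for T
  proof -
    have inj: "inj_on (\<lambda>(xs,ys). xs @ ys) (X T \<times> Y T)"
    proof (rule inj_onI, clarify)
      fix xs ys xs' ys' assume "xs \<in> X T" "xs' \<in> X T" "xs @ ys = xs' @ ys'"
      moreover have "length xs = p" if "xs \<in> X T" for xs
        using that T distinct_card[of xs] by (auto simp: X_def Ts_def permutations_of_set_def)
      ultimately show "xs = xs' \<and> ys = ys'" by (metis append_eq_append_conv)
    qed
    have fT: "finite T" "card T = p" "finite (U - T)" "card (U - T) = n - p"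
      using T fU by (auto simp: Ts_def U_def card_Diff_subset finite_subset)
    have "card (G T) = card (X T) * card (Y T)"
      unfolding G_def by (simp add: card_image[OF inj] card_cartesian_product)
    also have "card (X T) = card (PiI k P A p)" unfolding X_def by (rule transfer_PiI) (use fT in auto)
    also have "card (Y T) = card (PiI k P B (n - p))" unfolding Y_def by (rule transfer_PiI) (use fT in auto)
    finally show ?thesis .
  qed
  have "card (\<Union>(G ` Ts)) = (\<Sum>T\<in>Ts. card (G T))"
    by (rule card_UN_disjoint[OF fTs fin disj])
  also have "\<dots> = card Ts * (card (PiI k P A p) * card (PiI k P B (n - p)))"
    using cardG by simp
  also have "card Ts = n choose p" unfolding Ts_def using n_subsets[OF fU, of p] by (simp add: U_def)
  finally show ?thesis using eq by (simp add: U_def mult.assoc)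
qed

lemma occ_take:
  assumes "k \<ge> 1" "p \<le> length \<pi>"
  shows "occ_set k P (take p \<pi>) = {i\<in>occ_set k P \<pi>. i + k - 1 \<le> p}"
proof -
  have w: "take k (drop (i - 1) (take p \<pi>)) = take k (drop (i - 1) \<pi>)" if "1 \<le> i" "i + k - 1 \<le> p" for i
  proof -
    have "k \<le> Suc p - i" using that by linarith
    then show ?thesis using that by (simp add: drop_take take_take min_def)
  qed
  show ?thesis unfolding occ_set_def using assms w by auto
qed

lemma occ_drop:
  assumes "k \<ge> 1"
  shows "occ_set k P (drop p \<pi>) = {i. 1 \<le> i \<and> i + p \<in> occ_set k P \<pi>}"
proof -
  have w: "drop (i - 1) (drop p \<pi>) = drop (i + p - 1) \<pi>" if "1 \<le> i" for i
    using that by (simp add: add.commute)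
  show ?thesis unfolding occ_set_def using assms w by auto
qed

lemma no_overlap:
  assumes no: "nonoverlapping k P" and i: "i \<in> occ_set k P \<pi>" and j: "j \<in> occ_set k P \<pi>"
    and ij: "i < j" "j < i + k - 1"
  shows False
proof -
  obtain \<sigma> where \<sigma>: "\<sigma> \<in> P" "order_iso (take k (drop (i - 1) \<pi>)) \<sigma>" and i1: "1 \<le> i"
    using i unfolding occ_set_def by auto
  obtain \<tau> where \<tau>: "\<tau> \<in> P" "order_iso (take k (drop (j - 1) \<pi>)) \<tau>"
    using j unfolding occ_set_def by auto
  define d where "d = j - i"
  define l where "l = k - d"
  have l: "1 < l" "l < k" "k - l = d" using ij i1 by (auto simp: l_def d_def)
  have kk: "i + k - j \<le> k" using ij by linarith
  have e: "drop d (take k (drop (i - 1) \<pi>)) = take l (take k (drop (j - 1) \<pi>))"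
    using ij i1 kk by (simp add: drop_take take_take l_def d_def min_def add.commute)
  have 1: "order_iso (drop d (take k (drop (i - 1) \<pi>))) (drop d \<sigma>)" by (rule order_iso_drop[OF \<sigma>(2)])
  have 2: "order_iso (take l (take k (drop (j - 1) \<pi>))) (take l \<tau>)" by (rule order_iso_take[OF \<tau>(2)])
  have "order_iso (take l \<tau>) (drop (k - l) \<sigma>)"
    using 1 2 e l(3) by (metis order_iso_sym order_iso_trans)
  then show False using no \<sigma>(1) \<tau>(1) l unfolding nonoverlapping_def by blast
qed

lemma perm_len: "\<pi> \<in> permutations_of_set {1..n} \<Longrightarrow> length \<pi> = n"
  using length_finite_permutations_of_set by fastforce

lemma occ_pos: "i \<in> occ_set k P \<pi> \<Longrightarrow> 1 \<le> i"
  unfolding occ_set_def by auto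

lemma R1:
  assumes k: "k \<ge> 2" and no: "nonoverlapping k P" and fin: "finite I0"
    and I0: "\<forall>i\<in>I0. 1 \<le> i \<and> i + k - 1 \<le> q"
    and q: "q = 1 \<or> (q \<ge> k \<and> q - k + 1 \<in> I0)" and qn: "q \<le> n"
  shows "card (PiI k P I0 n) + card (PiI k P (insert q I0) n)
       = (n choose q) * card (PiI k P I0 q) * card (PiI k P {} (n - q))"
proof -
  have qI: "q \<notin> I0" using I0 k by fastforce
  have eq: "{\<pi>\<in>permutations_of_set {1..n}. occ_set k P (take q \<pi>) = I0 \<and> occ_set k P (drop q \<pi>) = {}}
      = PiI k P I0 n \<union> PiI k P (insert q I0) n"
  proof (intro set_eqI iffI)
    fix \<pi> assume h: "\<pi> \<in> {\<pi>\<in>permutations_of_set {1..n}. occ_set k P (take q \<pi>) = I0 \<and> occ_set k P (drop q \<pi>) = {}}"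
    have len: "length \<pi> = n" using h perm_len by blast
    have t: "{i\<in>occ_set k P \<pi>. i + k - 1 \<le> q} = I0" using h occ_take[of k q \<pi> P] k len qn by auto
    have d: "{i. 1 \<le> i \<and> i + q \<in> occ_set k P \<pi>} = {}" using h occ_drop[of k P q \<pi>] k by auto
    have sub: "occ_set k P \<pi> \<subseteq> insert q I0"
    proof
      fix i assume i: "i \<in> occ_set k P \<pi>"
      have i1: "1 \<le> i" using occ_pos[OF i] .
      show "i \<in> insert q I0"
      proof (cases "i + k - 1 \<le> q")
        case True then show ?thesis using t i by auto
      next
        case False
        have "\<not> i > q"
        proof
          assume "i > q"
          then have "(i - q) + q \<in> occ_set k P \<pi>" using i by simp
          moreover have "1 \<le> i - q" using \<open>i > q\<close> by simp
          ultimately show False using d by blast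
        qed
        moreover have "\<not> i < q"
        proof
          assume "i < q"
          then have "q \<ge> k \<and> q - k + 1 \<in> I0" using q i1 by auto
          then have "q - k + 1 \<in> occ_set k P \<pi>" using t by auto
          moreover have "q - k + 1 < i" "i < q - k + 1 + k - 1" using False \<open>i < q\<close> k \<open>q \<ge> k \<and> _\<close> by linarith+
          ultimately show False using no_overlap[OF no _ i, of "q - k + 1"] by blast
        qed
        ultimately show ?thesis by auto
      qed
    qed
    have "I0 \<subseteq> occ_set k P \<pi>" using t by auto
    then have "occ_set k P \<pi> = I0 \<or> occ_set k P \<pi> = insert q I0" using sub qI by blast
    then show "\<pi> \<in> PiI k P I0 n \<union> PiI k P (insert q I0) n" using h unfolding PiI_def by auto
  next
    fix \<pi> assume h: "\<pi> \<in> PiI k P I0 n \<union> PiI k P (insert q I0) n"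
    then have p: "\<pi> \<in> permutations_of_set {1..n}" unfolding PiI_def by auto
    have len: "length \<pi> = n" using p perm_len by blast
    have o: "occ_set k P \<pi> = I0 \<or> occ_set k P \<pi> = insert q I0" using h unfolding PiI_def by auto
    have "occ_set k P (take q \<pi>) = I0"
      using o occ_take[of k q \<pi> P] k len qn I0 by auto
    moreover have "occ_set k P (drop q \<pi>) = {}"
      using o occ_drop[of k P q \<pi>] k I0 by fastforce
    ultimately show "\<pi> \<in> {\<pi>\<in>permutations_of_set {1..n}. occ_set k P (take q \<pi>) = I0 \<and> occ_set k P (drop q \<pi>) = {}}"
      using p by auto
  qed
  have disj: "PiI k P I0 n \<inter> PiI k P (insert q I0) n = {}" using qI unfolding PiI_def by auto
  have f: "finite (PiI k P I0 n)" "finite (PiI k P (insert q I0) n)" unfolding PiI_def by auto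
  have "card (PiI k P I0 n) + card (PiI k P (insert q I0) n) = card (PiI k P I0 n \<union> PiI k P (insert q I0) n)"
    using card_Un_disjoint[OF f disj] by simp
  also have "\<dots> = (n choose q) * card (PiI k P I0 q) * card (PiI k P {} (n - q))"
    using eq product_count[OF qn, of k P I0 "{}"] by simp
  finally show ?thesis .
qed

lemma R2:
  assumes k: "k \<ge> 2" and no: "nonoverlapping k P" and fin: "finite I0"
    and I0: "\<forall>i\<in>I0. 1 \<le> i \<and> i + k - 1 < m" and m: "m \<ge> 1" and mn: "m - 1 \<le> n"
  shows "card (PiI k P (insert m I0) n) + (if k \<le> m then card (PiI k P (insert (m - k + 1) (insert m I0)) n) else 0)
       = (n choose (m - 1)) * card (PiI k P I0 (m - 1)) * card (PiI k P {1} (n - (m - 1)))"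
proof -
  define p where "p = m - 1"
  have mI: "m \<notin> I0" using I0 k by fastforce
  define E where "E = (if k \<le> m then PiI k P (insert (m - k + 1) (insert m I0)) n else {})"
  have eq: "{\<pi>\<in>permutations_of_set {1..n}. occ_set k P (take p \<pi>) = I0 \<and> occ_set k P (drop p \<pi>) = {1}}
      = PiI k P (insert m I0) n \<union> E"
  proof (intro set_eqI iffI)
    fix \<pi> assume h: "\<pi> \<in> {\<pi>\<in>permutations_of_set {1..n}. occ_set k P (take p \<pi>) = I0 \<and> occ_set k P (drop p \<pi>) = {1}}"
    have len: "length \<pi> = n" using h perm_len by blast
    have t0: "occ_set k P (take p \<pi>) = I0" using h by blast
    have t: "{i\<in>occ_set k P \<pi>. i + k - 1 \<le> p} = I0" using t0 occ_take[of k p \<pi> P] k len mn p_def by simp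
    have d0: "occ_set k P (drop p \<pi>) = {1}" using h by blast
    have d: "{i. 1 \<le> i \<and> i + p \<in> occ_set k P \<pi>} = {1}" using d0 occ_drop[of k P p \<pi>] k by simp
    have "1 \<in> {i. 1 \<le> i \<and> i + p \<in> occ_set k P \<pi>}" using d by simp
    then have "1 + p \<in> occ_set k P \<pi>" by simp
    then have mo: "m \<in> occ_set k P \<pi>" using p_def m by simp
    have sub: "occ_set k P \<pi> \<subseteq> insert m I0 \<union> {i. i + k - 1 = m}"
    proof
      fix i assume i: "i \<in> occ_set k P \<pi>"
      have i1: "1 \<le> i" using occ_pos[OF i] .
      show "i \<in> insert m I0 \<union> {i. i + k - 1 = m}"
      proof (cases "i + k - 1 \<le> p")
        case True then show ?thesis using t i by auto
      next
        case False
        have "\<not> i > m"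
        proof
          assume "i > m"
          then have "(i - p) + p \<in> occ_set k P \<pi>" using i p_def by simp
          moreover have "1 \<le> i - p" "i - p \<noteq> 1" using \<open>i > m\<close> p_def m by auto
          ultimately have "i - p \<in> {i. 1 \<le> i \<and> i + p \<in> occ_set k P \<pi>}" by simp
          then have "i - p \<in> {1::nat}" by (simp only: d)
          then show False using \<open>i - p \<noteq> 1\<close> by simp
        qed
        moreover have "\<not> (i < m \<and> m < i + k - 1)"
          using no_overlap[OF no i mo] by blast
        ultimately have "i = m \<or> i + k - 1 = m" using False p_def m i1 k by linarith
        then show ?thesis by blast
      qed
    qed
    have "I0 \<subseteq> occ_set k P \<pi>" using t by auto
    then have sub2: "insert m I0 \<subseteq> occ_set k P \<pi>" using mo by auto
    show "\<pi> \<in> PiI k P (insert m I0) n \<union> E"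
    proof (cases "\<exists>c. c \<in> occ_set k P \<pi> \<and> c + k - 1 = m")
      case True
      then obtain c where c: "c \<in> occ_set k P \<pi>" "c + k - 1 = m" by blast
      have c1: "1 \<le> c" using occ_pos[OF c(1)] .
      have km: "k \<le> m" "c = m - k + 1" using c(2) c1 by auto
      have "occ_set k P \<pi> = insert (m - k + 1) (insert m I0)"
      proof (rule equalityI)
        show "occ_set k P \<pi> \<subseteq> insert (m - k + 1) (insert m I0)"
        proof
          fix x assume x: "x \<in> occ_set k P \<pi>"
          then have "x \<in> insert m I0 \<or> x + k - 1 = m" using sub by blast
          moreover have "x + k - 1 = m \<Longrightarrow> x = m - k + 1" using c(2) km k by linarith
          ultimately show "x \<in> insert (m - k + 1) (insert m I0)" by blast
        qed
        show "insert (m - k + 1) (insert m I0) \<subseteq> occ_set k P \<pi>" using sub2 c(1) km(2) by blast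
      qed
      then show ?thesis using h km unfolding E_def PiI_def by auto
    next
      case False
      then have "occ_set k P \<pi> = insert m I0" using sub sub2 by auto
      then show ?thesis using h unfolding PiI_def by auto
    qed
  next
    fix \<pi> assume h: "\<pi> \<in> PiI k P (insert m I0) n \<union> E"
    then have p: "\<pi> \<in> permutations_of_set {1..n}" unfolding PiI_def E_def by (auto split: if_splits)
    have len: "length \<pi> = n" using p perm_len by blast
    have o: "occ_set k P \<pi> = insert m I0 \<or> (k \<le> m \<and> occ_set k P \<pi> = insert (m - k + 1) (insert m I0))"
      using h unfolding PiI_def E_def by (auto split: if_splits)
    have "occ_set k P (take p \<pi>) = I0"
    proof -
      have hm: "\<not> m + k - 1 \<le> p" using p_def k m by linarith
      have hc: "\<not> (m - k + 1) + k - 1 \<le> p" if "k \<le> m" using p_def k m that by linarith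
      have hI: "\<forall>i\<in>I0. i + k - 1 \<le> p" using I0 p_def by fastforce
      have "{i\<in>occ_set k P \<pi>. i + k - 1 \<le> p} = I0"
        using o
      proof
        assume "occ_set k P \<pi> = insert m I0"
        moreover have "{i \<in> insert m I0. i + k - 1 \<le> p} = I0"
        proof (intro set_eqI iffI)
          fix x assume "x \<in> {i \<in> insert m I0. i + k - 1 \<le> p}"
          then show "x \<in> I0" using hm by (cases "x = m") auto
        next
          fix x assume "x \<in> I0" then show "x \<in> {i \<in> insert m I0. i + k - 1 \<le> p}" using hI by simp
        qed
        ultimately show ?thesis by (simp only:)
      next
        assume a: "k \<le> m \<and> occ_set k P \<pi> = insert (m - k + 1) (insert m I0)"
        then have "\<not> (m - k + 1) + k - 1 \<le> p" using hc by blast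
        moreover have "{i \<in> insert (m - k + 1) (insert m I0). i + k - 1 \<le> p} = I0"
        proof (intro set_eqI iffI)
          fix x assume x: "x \<in> {i \<in> insert (m - k + 1) (insert m I0). i + k - 1 \<le> p}"
          have "x \<noteq> m - k + 1" using x calculation by auto
          moreover have "x \<noteq> m" using x hm by auto
          ultimately show "x \<in> I0" using x by simp
        next
          fix x assume "x \<in> I0" then show "x \<in> {i \<in> insert (m - k + 1) (insert m I0). i + k - 1 \<le> p}" using hI by simp
        qed
        moreover have "occ_set k P \<pi> = insert (m - k + 1) (insert m I0)" using a by blast
        ultimately show ?thesis by (simp only:)
      qed
      then show ?thesis using occ_take[of k p \<pi> P] k len mn p_def by auto
    qed
    moreover have "occ_set k P (drop p \<pi>) = {1}"
    proof -
      have hI': "\<forall>i\<in>I0. i \<le> m"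
      proof
        fix i assume "i \<in> I0" then have "i + k - 1 < m" using I0 by blast
        then show "i \<le> m" by linarith
      qed
      have hc': "m - k + 1 \<le> m" using k m by linarith
      have hle: "\<forall>x\<in>occ_set k P \<pi>. x \<le> m"
        using o
      proof (elim disjE)
        assume "occ_set k P \<pi> = insert m I0" then show ?thesis using hI' by simp
      next
        assume "k \<le> m \<and> occ_set k P \<pi> = insert (m - k + 1) (insert m I0)"
        then show ?thesis using hI' hc' by simp
      qed
      have mo: "m \<in> occ_set k P \<pi>" using o by (elim disjE) simp_all
      have pm: "1 + p = m" using p_def m by linarith
      have "{i. 1 \<le> i \<and> i + p \<in> occ_set k P \<pi>} = {1}"
      proof (intro set_eqI iffI)
        fix i assume "i \<in> {i. 1 \<le> i \<and> i + p \<in> occ_set k P \<pi>}"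
        then have "1 \<le> i" "i + p \<in> occ_set k P \<pi>" by blast+
        then have "1 \<le> i" "i + p \<le> m" using hle by blast+
        then have "i = 1" using pm by linarith
        then show "i \<in> {1}" by blast
      next
        fix i assume "i \<in> {1::nat}"
        then have "i = 1" by blast
        then show "i \<in> {i. 1 \<le> i \<and> i + p \<in> occ_set k P \<pi>}" using mo pm by simp
      qed
      then show ?thesis using occ_drop[of k P p \<pi>] k by auto
    qed
    ultimately show "\<pi> \<in> {\<pi>\<in>permutations_of_set {1..n}. occ_set k P (take p \<pi>) = I0 \<and> occ_set k P (drop p \<pi>) = {1}}"
      using p by auto
  qed
  have disj: "PiI k P (insert m I0) n \<inter> E = {}"
  proof -
    have "m - k + 1 \<notin> insert m I0" if "k \<le> m"
    proof
      assume a: "m - k + 1 \<in> insert m I0"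
      have "m - k + 1 \<noteq> m" using k that by linarith
      then have "m - k + 1 \<in> I0" using a by blast
      then have "(m - k + 1) + k - 1 < m" using I0 by blast
      then show False using that by linarith
    qed
    show ?thesis
    proof (cases "k \<le> m")
      case True
      have "x \<notin> E" if x: "x \<in> PiI k P (insert m I0) n" for x
      proof
        assume "x \<in> E"
        then have "occ_set k P x = insert (m - k + 1) (insert m I0)" using True unfolding E_def PiI_def by simp
        moreover have "occ_set k P x = insert m I0" using x unfolding PiI_def by simp
        ultimately have "m - k + 1 \<in> insert m I0" by (metis insertI1)
        then show False using \<open>k \<le> m \<Longrightarrow> _\<close> True by blast
      qed
      then show ?thesis by blast
    next
      case False then show ?thesis unfolding E_def by simp
    qed
  qed
  have f: "finite (PiI k P (insert m I0) n)" "finite E" unfolding PiI_def E_def by auto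
  have "card (PiI k P (insert m I0) n) + card E = card (PiI k P (insert m I0) n \<union> E)"
    using card_Un_disjoint[OF f disj] by simp
  also have "\<dots> = (n choose p) * card (PiI k P I0 p) * card (PiI k P {1} (n - p))"
    using eq product_count[of p n k P I0 "{1}"] mn p_def by simp
  finally have fin: "card (PiI k P (insert m I0) n) + card E = (n choose p) * card (PiI k P I0 p) * card (PiI k P {1} (n - p))" .
  have cE: "card E = (if k \<le> m then card (PiI k P (insert (m - k + 1) (insert m I0)) n) else 0)"
    unfolding E_def by simp
  show ?thesis using fin unfolding cE p_def .
qed

definition Good :: "nat \<Rightarrow> nat list set \<Rightarrow> (nat \<Rightarrow> rat) \<Rightarrow> nat \<Rightarrow> bool" where
  "Good k P h t \<longleftrightarrow> (\<exists>xs :: (rat poly \<times> int) list. \<forall>n\<ge>t.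
      h n = (\<Sum>(q,l)\<leftarrow>xs. poly q (of_nat n) * of_nat (av k P (int n + l))))"

lemma Good_zero: "Good k P (\<lambda>_. 0) t"
  unfolding Good_def by (rule exI[of _ "[]"]) simp

lemma Good_term: "Good k P (\<lambda>n. poly q (of_nat n) * of_nat (av k P (int n + l))) t"
  unfolding Good_def by (rule exI[of _ "[(q,l)]"]) simp

lemma Good_add: "Good k P f t \<Longrightarrow> Good k P g t \<Longrightarrow> Good k P (\<lambda>n. f n + g n) t"
  unfolding Good_def
proof (elim exE)
  fix xs ys
  assume a: "\<forall>n\<ge>t. f n = (\<Sum>(q,l)\<leftarrow>xs. poly q (of_nat n) * of_nat (av k P (int n + l)))"
     and b: "\<forall>n\<ge>t. g n = (\<Sum>(q,l)\<leftarrow>ys. poly q (of_nat n) * of_nat (av k P (int n + l)))"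
  show "\<exists>zs. \<forall>n\<ge>t. f n + g n = (\<Sum>(q,l)\<leftarrow>zs. poly q (of_nat n) * of_nat (av k P (int n + l)))"
    by (rule exI[of _ "xs @ ys"]) (use a b in simp)
qed

lemma sum_list_smult:
  "sum_list (map ((\<lambda>(q, l). poly q x * a l) \<circ> (\<lambda>(q, y). (smult c q, y))) xs) = c * (\<Sum>(q,l)\<leftarrow>xs. poly q x * a l)"
  for x :: rat
  by (induction xs) (auto simp: algebra_simps)

lemma Good_smult: "Good k P f t \<Longrightarrow> Good k P (\<lambda>n. c * f n) t"
  unfolding Good_def
proof (elim exE)
  fix xs
  assume a: "\<forall>n\<ge>t. f n = (\<Sum>(q,l)\<leftarrow>xs. poly q (of_nat n) * of_nat (av k P (int n + l)))"
  show "\<exists>zs. \<forall>n\<ge>t. c * f n = (\<Sum>(q,l)\<leftarrow>zs. poly q (of_nat n) * of_nat (av k P (int n + l)))"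
    by (rule exI[of _ "map (\<lambda>(q,l). (smult c q, l)) xs"]) (use a in \<open>simp add: sum_list_smult\<close>)
qed

lemma Good_diff: "Good k P f t \<Longrightarrow> Good k P g t \<Longrightarrow> Good k P (\<lambda>n. f n - g n) t"
  using Good_add[of k P f t "\<lambda>n. (-1) * g n"] Good_smult[of k P g t "-1"] by simp

lemma Good_mono: "Good k P f t \<Longrightarrow> t \<le> t' \<Longrightarrow> Good k P f t'"
  unfolding Good_def by auto

lemma Good_cong: "Good k P g t \<Longrightarrow> (\<And>n. n \<ge> t \<Longrightarrow> f n = g n) \<Longrightarrow> Good k P f t"
  unfolding Good_def by auto

definition bpoly :: "nat \<Rightarrow> rat poly" where
  "bpoly q = smult (1 / fact q) (\<Prod>i<q. [:- of_nat i, 1:])"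

lemma poly_bpoly: "poly (bpoly q) (of_nat n) = of_nat (n choose q)"
proof -
  have "of_nat (n choose q) = ((of_nat n :: rat) gchoose q)" by (rule binomial_gbinomial)
  also have "\<dots> = (\<Prod>i=0..<q. of_nat n - of_nat i) / fact q" by (rule gbinomial_prod_rev)
  also have "\<dots> = poly (bpoly q) (of_nat n)"
    by (simp add: bpoly_def poly_prod atLeast0LessThan)
  finally show ?thesis by simp
qed

lemma conv_aux:
  fixes x :: rat and a :: "int \<Rightarrow> rat"
  assumes "finite Ls" "\<forall>(q,l)\<in>set xs. degree q \<le> D \<and> l \<in> Ls"
  shows "(\<Sum>(j,l)\<in>{..D}\<times>Ls. (\<Sum>(q,l')\<leftarrow>xs. if l' = l then coeff q j else 0) * x ^ j * a l)
       = (\<Sum>(q,l)\<leftarrow>xs. poly q x * a l)"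
  using assms(2)
proof (induction xs)
  case Nil then show ?case by simp
next
  case (Cons ql xs)
  obtain q0 l0 where ql: "ql = (q0, l0)" by force
  have h0: "degree q0 \<le> D" "l0 \<in> Ls" using Cons.prems ql by auto
  have IH: "(\<Sum>(j,l)\<in>{..D}\<times>Ls. (\<Sum>(q,l')\<leftarrow>xs. if l' = l then coeff q j else 0) * x ^ j * a l)
       = (\<Sum>(q,l)\<leftarrow>xs. poly q x * a l)" using Cons by auto
  have split: "(\<Sum>(j,l)\<in>{..D}\<times>Ls. (\<Sum>(q,l')\<leftarrow>ql # xs. if l' = l then coeff q j else 0) * x ^ j * a l)
     = (\<Sum>(j,l)\<in>{..D}\<times>Ls. (if l0 = l then coeff q0 j else 0) * x ^ j * a l)
       + (\<Sum>(j,l)\<in>{..D}\<times>Ls. (\<Sum>(q,l')\<leftarrow>xs. if l' = l then coeff q j else 0) * x ^ j * a l)"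
    unfolding ql by (simp add: ring_distribs sum.distrib case_prod_beta) (simp only: fst_conv)
  have first: "(\<Sum>(j,l)\<in>{..D}\<times>Ls. (if l0 = l then coeff q0 j else 0) * x ^ j * a l) = poly q0 x * a l0"
  proof -
    have "(\<Sum>(j,l)\<in>{..D}\<times>Ls. (if l0 = l then coeff q0 j else 0) * x ^ j * a l)
        = (\<Sum>j\<le>D. \<Sum>l\<in>Ls. (if l0 = l then coeff q0 j * x ^ j * a l else 0))"
      by (subst sum.cartesian_product[symmetric]) (intro sum.cong refl, simp)
    also have "\<dots> = (\<Sum>j\<le>D. coeff q0 j * x ^ j * a l0)"
      using assms(1) h0 by (simp add: sum.delta)
    also have "\<dots> = (\<Sum>j\<le>D. coeff q0 j * x ^ j) * a l0" by (simp add: sum_distrib_right)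
    also have "(\<Sum>j\<le>D. coeff q0 j * x ^ j) = poly q0 x"
    proof -
      have "(\<Sum>j\<le>D. coeff q0 j * x ^ j) = (\<Sum>j\<le>degree q0. coeff q0 j * x ^ j)"
        by (rule sum.mono_neutral_right) (use h0 in \<open>auto simp: coeff_eq_0\<close>)
      then show ?thesis by (simp add: poly_altdef)
    qed
    finally show ?thesis .
  qed
  show ?case using split first IH ql by simp
qed

lemma Good_final:
  assumes "Good k P h t"
  shows "\<exists>F :: (nat \<times> int) set. \<exists>c :: nat \<times> int \<Rightarrow> rat. finite F \<and>
     (\<forall>n :: nat. n \<ge> t \<longrightarrow> h n = (\<Sum>(j, l)\<in>F. c (j, l) * (of_nat n) ^ j * of_nat (av k P (int n + l))))"
proof -
  obtain xs where xs: "\<forall>n\<ge>t. h n = (\<Sum>(q,l)\<leftarrow>xs. poly q (of_nat n) * of_nat (av k P (int n + l)))"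
    using assms unfolding Good_def by blast
  define D where "D = (\<Sum>(q,l)\<leftarrow>xs. degree q)"
  define Ls where "Ls = snd ` set xs"
  have fin: "finite Ls" unfolding Ls_def by simp
  have bnd: "\<forall>(q,l)\<in>set xs. degree q \<le> D \<and> l \<in> Ls"
  proof (clarify, intro conjI)
    fix q l assume "(q, l) \<in> set xs"
    then show "degree q \<le> D" unfolding D_def
      using member_le_sum_list[of "degree q" "map (\<lambda>(q,l). degree q) xs"] by force
    show "l \<in> Ls" using \<open>(q, l) \<in> set xs\<close> unfolding Ls_def by force
  qed
  define c where "c = (\<lambda>(j,l). (\<Sum>(q,l')\<leftarrow>xs. if l' = l then coeff q j else 0))"
  show ?thesis
  proof (intro exI conjI allI impI)
    show "finite ({..D} \<times> Ls)" using fin by simp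
    fix n :: nat assume "n \<ge> t"
    have "h n = (\<Sum>(q,l)\<leftarrow>xs. poly q (of_nat n) * of_nat (av k P (int n + l)))" using xs \<open>n \<ge> t\<close> by blast
    also have "\<dots> = (\<Sum>(j,l)\<in>{..D}\<times>Ls. (\<Sum>(q,l')\<leftarrow>xs. if l' = l then coeff q j else 0) * of_nat n ^ j * of_nat (av k P (int n + l)))"
      by (rule conv_aux[OF fin bnd, symmetric])
    also have "\<dots> = (\<Sum>(j,l)\<in>{..D}\<times>Ls. c (j, l) * of_nat n ^ j * of_nat (av k P (int n + l)))"
      unfolding c_def by simp
    finally show "h n = (\<Sum>(j,l)\<in>{..D}\<times>Ls. c (j, l) * of_nat n ^ j * of_nat (av k P (int n + l)))" .
  qed
qed

lemma av_shift: "s \<le> n \<Longrightarrow> av k P (int n + - int s) = card (PiI k P {} (n - s))"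
proof -
  assume "s \<le> n"
  then have e: "int n + - int s = int (n - s)" by simp
  show ?thesis unfolding av_def e by simp
qed

lemma caseA:
  assumes k: "k \<ge> 2" and no: "nonoverlapping k P" and fin: "finite J0"
    and J0: "\<forall>i\<in>J0. 1 \<le> i \<and> i + k - 1 \<le> m" and km: "k \<le> m" and c: "m - k + 1 \<in> J0"
    and G: "Good k P (\<lambda>n. of_nat (card (PiI k P J0 n))) m"
  shows "Good k P (\<lambda>n. of_nat (card (PiI k P (insert m J0) n))) (m + k - 1)"
proof -
  define a where "a = card (PiI k P J0 m)"
  have G1: "Good k P (\<lambda>n. poly (smult (of_nat a) (bpoly m)) (of_nat n) * of_nat (av k P (int n + - int m)) - of_nat (card (PiI k P J0 n))) (m + k - 1)"
    by (intro Good_diff Good_term Good_mono[OF G]) (use k in simp)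
  show ?thesis
  proof (rule Good_cong[OF G1])
    fix n assume n: "n \<ge> m + k - 1"
    then have mn: "m \<le> n" using k by simp
    have q: "m = 1 \<or> (m \<ge> k \<and> m - k + 1 \<in> J0)" using km c by simp
    have r: "card (PiI k P J0 n) + card (PiI k P (insert m J0) n) = (n choose m) * a * card (PiI k P {} (n - m))"
      using R1[OF k no fin J0 q mn] unfolding a_def .
    have "(of_nat (card (PiI k P (insert m J0) n)) :: rat) = of_nat ((n choose m) * a * card (PiI k P {} (n - m))) - of_nat (card (PiI k P J0 n))"
      using arg_cong[OF r, of "of_nat :: nat \<Rightarrow> rat"] by simp
    also have "\<dots> = poly (smult (of_nat a) (bpoly m)) (of_nat n) * of_nat (av k P (int n + - int m)) - of_nat (card (PiI k P J0 n))"
      using av_shift[OF mn, of k P] by (simp add: poly_bpoly)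
    finally show "(of_nat (card (PiI k P (insert m J0) n)) :: rat) = poly (smult (of_nat a) (bpoly m)) (of_nat n) * of_nat (av k P (int n + - int m)) - of_nat (card (PiI k P J0 n))" .
  qed
qed

lemma caseB:
  assumes k: "k \<ge> 2" and no: "nonoverlapping k P" and fin: "finite I0"
    and I0: "\<forall>i\<in>I0. 1 \<le> i \<and> i + k - 1 < m" and m: "m \<ge> 1"
    and GE: "k \<le> m \<Longrightarrow> Good k P (\<lambda>n. of_nat (card (PiI k P (insert (m - k + 1) (insert m I0)) n))) (m + k - 1)"
  shows "Good k P (\<lambda>n. of_nat (card (PiI k P (insert m I0) n))) (m + k - 1)"
proof -
  define E where "E = (\<lambda>n. if k \<le> m then (of_nat (card (PiI k P (insert (m - k + 1) (insert m I0)) n)) :: rat) else 0)"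
  have GE': "Good k P E (m + k - 1)"
  proof (cases "k \<le> m")
    case True then show ?thesis using GE unfolding E_def by simp
  next
    case False then show ?thesis unfolding E_def using Good_zero by simp
  qed
  define b where "b = card (PiI k P I0 (m - 1))"
  define c1 where "c1 = card (PiI k P {} 1)"
  define T1 where "T1 = smult (of_nat b * of_nat c1) (bpoly (m - 1) * [:1 - of_nat m, 1:])"
  define T2 where "T2 = smult (of_nat b) (bpoly (m - 1))"
  have G1: "Good k P (\<lambda>n. poly T1 (of_nat n) * of_nat (av k P (int n + - int m))
       - poly T2 (of_nat n) * of_nat (av k P (int n + - int (m - 1))) - E n) (m + k - 1)"
    by (intro Good_diff Good_term GE')
  show ?thesis
  proof (rule Good_cong[OF G1])
    fix n assume n: "n \<ge> m + k - 1"
    have mn: "m - 1 \<le> n" "m \<le> n" using n k by auto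
    define N where "N = n - (m - 1)"
    have N1: "N \<ge> 1" using n k unfolding N_def by simp
    have r2: "card (PiI k P (insert m I0) n) + (if k \<le> m then card (PiI k P (insert (m - k + 1) (insert m I0)) n) else 0)
       = (n choose (m - 1)) * b * card (PiI k P {1} N)"
      using R2[OF k no fin I0 m mn(1)] unfolding b_def N_def .
    have q1: "(1::nat) = 1 \<or> (1 \<ge> k \<and> 1 - k + 1 \<in> {})" by simp
    have r1: "card (PiI k P {} N) + card (PiI k P (insert 1 {}) N) = (N choose 1) * c1 * card (PiI k P {} (N - 1))"
      using R1[OF k no finite.emptyI _ q1 N1] unfolding c1_def by simp
    have eN: "N - 1 = n - m" "N = n - (m - 1)" using mn m unfolding N_def by auto
    have ratN: "(of_nat N :: rat) = 1 - of_nat m + of_nat n" using mn m unfolding N_def by (simp add: of_nat_diff)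
    have Er: "E n = of_nat (if k \<le> m then card (PiI k P (insert (m - k + 1) (insert m I0)) n) else 0)"
      unfolding E_def by simp
    have "(of_nat (card (PiI k P (insert m I0) n)) :: rat)
        = of_nat (n choose (m - 1)) * of_nat b * of_nat (card (PiI k P {1} N)) - E n"
      using arg_cong[OF r2, of "of_nat :: nat \<Rightarrow> rat"] Er by simp
    also have "(of_nat (card (PiI k P {1} N)) :: rat) = of_nat N * of_nat c1 * of_nat (card (PiI k P {} (N - 1))) - of_nat (card (PiI k P {} N))"
      using arg_cong[OF r1, of "of_nat :: nat \<Rightarrow> rat"] by simp
    also have "of_nat (card (PiI k P {} (N - 1))) = (of_nat (av k P (int n + - int m)) :: rat)"
      using av_shift[OF mn(2), of k P] eN by simp
    also have "of_nat (card (PiI k P {} N)) = (of_nat (av k P (int n + - int (m - 1)))  :: rat)"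
      using av_shift[OF mn(1), of k P] eN by simp
    finally show "(of_nat (card (PiI k P (insert m I0) n)) :: rat) = poly T1 (of_nat n) * of_nat (av k P (int n + - int m))
       - poly T2 (of_nat n) * of_nat (av k P (int n + - int (m - 1))) - E n"
      unfolding T1_def T2_def using ratN by (simp add: poly_bpoly algebra_simps)
  qed
qed

lemma main_ind:
  assumes k: "k \<ge> 2" and no: "nonoverlapping k P"
  shows "\<forall>I. finite I \<and> (\<forall>i\<in>I. 0 < i) \<and> Max (I \<union> {0}) = m
           \<longrightarrow> Good k P (\<lambda>n. of_nat (card (PiI k P I n))) (m + k - 1)"
proof (induction m rule: less_induct)
  case (less m)
  show ?case
  proof (intro allI impI, elim conjE)
    fix I :: "nat set" assume fI: "finite I" and pos: "\<forall>i\<in>I. 0 < i" and mx: "Max (I \<union> {0}) = m"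
    show "Good k P (\<lambda>n. of_nat (card (PiI k P I n))) (m + k - 1)"
    proof (cases "I = {}")
      case True
      have G: "Good k P (\<lambda>n. poly 1 (of_nat n) * of_nat (av k P (int n + 0))) (m + k - 1)"
        by (rule Good_term)
      show ?thesis
      proof (rule Good_cong[OF G])
        fix n show "(of_nat (card (PiI k P I n)) :: rat) = poly 1 (of_nat n) * of_nat (av k P (int n + 0))"
          using True unfolding av_def by simp
      qed
    next
      case False
      have fI0: "finite (I \<union> {0})" using fI by simp
      have mge: "\<forall>i\<in>I. i \<le> m" using Max_ge[OF fI0] mx by auto
      have min: "m \<in> I \<union> {0}" using Max_in[OF fI0] mx by auto
      obtain i0 where "i0 \<in> I" using False by blast
      then have "0 < m" using pos mge by fastforce
      then have mI: "m \<in> I" using min by auto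
      define I0 where "I0 = I - {m}"
      have Ieq: "I = insert m I0" using mI unfolding I0_def by blast
      have fI0': "finite I0" using fI unfolding I0_def by simp
      have I0b: "\<forall>i\<in>I0. 1 \<le> i \<and> i < m" using pos mge unfolding I0_def by fastforce
      show ?thesis
      proof (cases "\<exists>i\<in>I0. m < i + k - 1")
        case True
        then obtain i where i: "i \<in> I0" "m < i + k - 1" by blast
        have "PiI k P I n = {}" for n
        proof (rule ccontr)
          assume "PiI k P I n \<noteq> {}"
          then obtain \<pi> where "\<pi> \<in> PiI k P I n" by blast
          then have o: "occ_set k P \<pi> = I" unfolding PiI_def by simp
          have "i \<in> occ_set k P \<pi>" "m \<in> occ_set k P \<pi>" using o i mI Ieq by auto
          then show False using no_overlap[OF no, of i \<pi> m] i I0b by auto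
        qed
        then show ?thesis using Good_zero[of k P "m + k - 1"] by simp
      next
        case False
        then have hle: "\<forall>i\<in>I0. i + k - 1 \<le> m" by (simp add: not_less)
        have I0A: "\<forall>i\<in>I0. 1 \<le> i \<and> i + k - 1 \<le> m" using hle I0b by simp
        show ?thesis
        proof (cases "k \<le> m \<and> m - k + 1 \<in> I0")
          case True
          have mx0: "Max (I0 \<union> {0}) = m - k + 1"
          proof (rule Max_eqI)
            show "finite (I0 \<union> {0})" using fI0' by simp
            show "m - k + 1 \<in> I0 \<union> {0}" using True by simp
            fix y assume "y \<in> I0 \<union> {0}" then show "y \<le> m - k + 1" using hle k True by auto
          qed
          have km0: "k \<le> m" using True by simp
          have lt: "m - k + 1 < m" using km0 k by linarith
          have G0: "Good k P (\<lambda>n. of_nat (card (PiI k P I0 n))) (m - k + 1 + k - 1)"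
          proof -
            have posI0: "\<forall>i\<in>I0. 0 < i" using I0b by auto
            then show ?thesis using less.IH[OF lt] fI0' mx0 by blast
          qed
          have e: "m - k + 1 + k - 1 = m" using True by simp
          show ?thesis unfolding Ieq
            by (rule caseA[OF k no fI0' I0A]) (use True G0 e in auto)
        next
          case False
          have I0B: "\<forall>i\<in>I0. 1 \<le> i \<and> i + k - 1 < m"
          proof
            fix i assume i: "i \<in> I0"
            have "i + k - 1 \<noteq> m"
            proof
              assume "i + k - 1 = m"
              then have "k \<le> m" "m - k + 1 = i" using I0b i by auto
              then show False using False i by simp
            qed
            then show "1 \<le> i \<and> i + k - 1 < m" using hle I0b i by fastforce
          qed
          have m1: "m \<ge> 1" using \<open>0 < m\<close> by simp
          show ?thesis unfolding Ieq
          proof (rule caseB[OF k no fI0' I0B m1])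
            assume km: "k \<le> m"
            define J0 where "J0 = insert (m - k + 1) I0"
            have fJ: "finite J0" using fI0' unfolding J0_def by simp
            have J0A: "\<forall>i\<in>J0. 1 \<le> i \<and> i + k - 1 \<le> m" using I0A km unfolding J0_def by auto
            have mx0: "Max (J0 \<union> {0}) = m - k + 1"
            proof (rule Max_eqI)
              show "finite (J0 \<union> {0})" using fJ by simp
              show "m - k + 1 \<in> J0 \<union> {0}" unfolding J0_def by simp
              fix y assume "y \<in> J0 \<union> {0}" then show "y \<le> m - k + 1" using I0B km unfolding J0_def by auto
            qed
            have lt: "m - k + 1 < m" using km k by linarith
            have posJ: "\<forall>i\<in>J0. 0 < i" using J0A by auto
            have G0: "Good k P (\<lambda>n. of_nat (card (PiI k P J0 n))) (m - k + 1 + k - 1)"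
              using less.IH[OF lt] fJ posJ mx0 by blast
            have e: "m - k + 1 + k - 1 = m" using km by simp
            have "Good k P (\<lambda>n. of_nat (card (PiI k P (insert m J0) n))) (m + k - 1)"
              by (rule caseA[OF k no fJ J0A km]) (use G0 e in \<open>auto simp: J0_def\<close>)
            then show "Good k P (\<lambda>n. of_nat (card (PiI k P (insert (m - k + 1) (insert m I0)) n))) (m + k - 1)"
              unfolding J0_def by (simp add: insert_commute)
          qed
        qed
      qed
    qed
  qed
qed

theorem theorem6p1:
  fixes k :: nat and P :: "nat list set" and I :: "nat set"
  assumes "k \<ge> 2"
    and "P \<subseteq> permutations_of_set {1..k}"
    and "nonoverlapping k P"
    and "finite I" and "\<forall>i\<in>I. i > 0"
  shows "\<exists>F :: (nat \<times> int) set. \<exists>c :: nat \<times> int \<Rightarrow> rat. finite F \<and>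
     (\<forall>n :: nat. n \<ge> Max (I \<union> {0}) + k - 1 \<longrightarrow>
        rat_of_nat (card (PiI k P I n)) =
          (\<Sum>(j, l)\<in>F. c (j, l) * (of_nat n) ^ j * of_nat (av k P (int n + l))))"
proof -
  have "Good k P (\<lambda>n. of_nat (card (PiI k P I n))) (Max (I \<union> {0}) + k - 1)"
    using main_ind[OF assms(1) assms(3), of "Max (I \<union> {0})"] assms(4,5) by blast
  from Good_final[OF this] show ?thesis by simp
qed

end
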